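(* For every positive integer $m$, $$\zeta(m,1)=2^{\lfloor (m-1)/2\rfloor},\qquad \zeta(m,2)=3^{\lfloor (m-1)/2\rfloor},$$ $$\zeta(m,3)=\frac{(2+\sqrt2)^{\lfloor (m+1)/2\rfloor}+(2-\sqrt2)^{\lfloor (m+1)/2\rfloor}}{4},$$ $$\zeta(m,4)=\frac{\big(\tfrac{5+\sqrt5}{2}\big)^{\lfloor (m+1)/2\rfloor}+\big(\tfrac{5-\sqrt5}{2}\big)^{\lfloor (m+1)/2\rfloor}}{5},$$ $$\zeta(m,5)=\frac{(2+\sqrt3)^{\lfloor (m+1)/2\rfloor}+(2-\sqrt3)^{\lfloor (m+1)/2\rfloor}+2^{\lfloor (m+1)/2\rfloor}}{6}.$$
   Context: For positive integers $m$ and $\delta$, a $\delta$-deviation set of size $m$ is a finite sequence $(\alpha_1,\alpha_2,\dots,\alpha_\ell)$ of positive integers such that (i) $\sum_i\alpha_i=m$; (ii) $\big|\sum_i\alpha_{2i-1}-\sum_i\alpha_{2i}\big|\le 1$; (iii) $\big|\sum_{1\le i\le j}(-1)^{i-1}\alpha_i\big|\le\delta$ for every $j\ge 1$. $\zeta(m,\delta)$ denotes the number of $\delta$-deviation sets of size $m$. *)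

theory Defs
  imports Complex_Main
begin

text \<open>Alternating sum of the first j entries: sum of (-1)^(i-1) alpha_i for 1 <= i <= j
  (0-indexed: entry i carries sign (-1)^i).\<close>
definition alt_prefix :: "nat list \<Rightarrow> nat \<Rightarrow> int" where
  "alt_prefix xs j = (\<Sum>i<min j (length xs). (-1)^i * int (xs ! i))"

definition deviation_set :: "nat \<Rightarrow> nat \<Rightarrow> nat list \<Rightarrow> bool" where
  "deviation_set m \<delta> xs \<longleftrightarrow>
     (\<forall>a\<in>set xs. 0 < a) \<and>
     sum_list xs = m \<and>
     \<bar>alt_prefix xs (length xs)\<bar> \<le> 1 \<and>
     (\<forall>j\<ge>1. \<bar>alt_prefix xs j\<bar> \<le> int \<delta>)"

definition zeta :: "nat \<Rightarrow> nat \<Rightarrow> nat" where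
  "zeta m \<delta> = card {xs. deviation_set m \<delta> xs}"

end

theory Submission
  imports Defs
begin

fun W :: "nat \<Rightarrow> nat \<Rightarrow> int \<Rightarrow> nat" where
  "W d 0 p = (if \<bar>p\<bar> \<le> 1 \<and> \<bar>p\<bar> \<le> int d then 1 else 0)"
| "W d (Suc n) p = (if \<bar>p\<bar> \<le> int d then W d n (p+1) + W d n (p-1) else 0)"

lemma W_neg[simp]: "W d n (-p) = W d n p"
proof (induction n arbitrary: p)
  case 0 then show ?case by simp
next
  case (Suc n)
  have 1: "W d n (-p + 1) = W d n (p - 1)" using Suc.IH[of "p-1"] by simp
  have 2: "W d n (-p - 1) = W d n (p + 1)" using Suc.IH[of "p+1"] by simp
  show ?case using 1 2 by simp
qed

lemma W_out: "\<bar>p\<bar> > int d \<Longrightarrow> W d n p = 0"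
  by (cases n) auto

fun ok :: "nat \<Rightarrow> int \<Rightarrow> nat list \<Rightarrow> bool" where
  "ok d s [] = (\<bar>s\<bar> \<le> 1)"
| "ok d s (a # xs) = (0 < a \<and> \<bar>s + int a\<bar> \<le> int d \<and> ok d (-(s + int a)) xs)"

lemma alt_prefix_Nil[simp]: "alt_prefix [] j = 0"
  by (simp add: alt_prefix_def)
lemma alt_prefix_0[simp]: "alt_prefix xs 0 = 0"
  by (simp add: alt_prefix_def)
lemma alt_prefix_Cons: "alt_prefix (a#xs) (Suc j) = int a - alt_prefix xs j"
proof -
  have "min (Suc j) (length (a#xs)) = Suc (min j (length xs))" by simp
  then show ?thesis unfolding alt_prefix_def
    by (simp only: sum.lessThan_Suc_shift) (simp add: sum_negf)
qed

lemma ok_iff: "1 \<le> d \<Longrightarrow> ok d s xs \<longleftrightarrow> ((\<forall>a\<in>set xs. 0<a) \<and> \<bar>s + alt_prefix xs (length xs)\<bar> \<le> 1 \<and> (\<forall>j\<ge>1. \<bar>s + alt_prefix xs j\<bar> \<le> int d))"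
proof (induction xs arbitrary: s)
  case Nil then show ?case by auto
next
  case (Cons a xs)
  have eq: "\<And>j. \<bar>s + alt_prefix (a#xs) (Suc j)\<bar> = \<bar>-(s+int a) + alt_prefix xs j\<bar>"
    by (simp add: alt_prefix_Cons)
  have A: "(\<forall>j\<ge>1. \<bar>s + alt_prefix (a#xs) j\<bar> \<le> int d) \<longleftrightarrow> (\<forall>j. \<bar>-(s+int a) + alt_prefix xs j\<bar> \<le> int d)"
    by (metis eq One_nat_def Suc_le_eq Suc_pred' less_Suc_eq_le zero_less_iff_neq_zero le_add1 plus_1_eq_Suc Suc_le_mono)
  have B: "(\<forall>j. \<bar>-(s+int a) + alt_prefix xs j\<bar> \<le> int d) \<longleftrightarrow> \<bar>s + int a\<bar> \<le> int d \<and> (\<forall>j\<ge>1. \<bar>-(s+int a) + alt_prefix xs j\<bar> \<le> int d)"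
    by (metis abs_minus_cancel add.right_neutral alt_prefix_0 less_one not_le)
  have C: "\<bar>s + alt_prefix (a#xs) (length (a#xs))\<bar> = \<bar>-(s+int a) + alt_prefix xs (length xs)\<bar>"
    using eq by simp
  have D: "ok d s (a#xs) \<longleftrightarrow> 0<a \<and> \<bar>s + int a\<bar> \<le> int d \<and> (\<forall>b\<in>set xs. 0<b) \<and> \<bar>-(s+int a) + alt_prefix xs (length xs)\<bar> \<le> 1 \<and> (\<forall>j\<ge>1. \<bar>-(s+int a) + alt_prefix xs j\<bar> \<le> int d)"
    using Cons.IH[of "-(s+int a)"] Cons.prems by (simp only: ok.simps)
  show ?case unfolding D A B C by (simp only: list.set ball_simps(7) conj_ac)
qed

definition T :: "nat \<Rightarrow> int \<Rightarrow> nat \<Rightarrow> nat list set" where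
  "T d s m = {xs. ok d s xs \<and> sum_list xs = m}"

lemma ok_pos: "ok d s xs \<Longrightarrow> \<forall>a\<in>set xs. 0 < a"
  by (induction xs arbitrary: s) auto

lemma len_le_sum: "\<forall>a\<in>set xs. 0 < (a::nat) \<Longrightarrow> length xs \<le> sum_list xs"
  by (induction xs) auto

lemma finite_T: "finite (T d s m)"
proof -
  have "T d s m \<subseteq> {xs. set xs \<subseteq> {0..m} \<and> length xs \<le> m}"
    unfolding T_def using ok_pos len_le_sum member_le_sum_list by fastforce
  then show ?thesis using finite_lists_length_le[of "{0..m}" m] finite_subset by blast
qed

lemma T_one: "T d s (Suc 0) = (if \<bar>s+1\<bar> \<le> int d \<and> \<bar>s+1\<bar> \<le> 1 then {[1]} else {})"
proof -
  have "xs \<in> T d s (Suc 0) \<longleftrightarrow> xs = [1] \<and> \<bar>s+1\<bar> \<le> int d \<and> \<bar>s+1\<bar> \<le> 1" for xs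
  proof (cases xs)
    case Nil then show ?thesis by (simp add: T_def)
  next
    case (Cons a ys)
    show ?thesis
    proof
      assume h: "xs \<in> T d s (Suc 0)"
      then have o: "ok d s (a#ys)" "a + sum_list ys = 1" using Cons by (auto simp: T_def)
      then have "\<forall>b\<in>set ys. 0 < b" using ok_pos by fastforce
      moreover have "a > 0" using o by simp
      ultimately have "a = 1" "ys = []" using o(2)
        by (auto simp: sum_list_eq_0_iff) (metis add_is_1 neq_Nil_conv list.set_intros(1) not_less0 sum_list_eq_0_iff gr_implies_not0)
      then show "xs = [1] \<and> \<bar>s+1\<bar> \<le> int d \<and> \<bar>s+1\<bar> \<le> 1" using o Cons by auto
    qed (auto simp: T_def Cons)
  qed
  then show ?thesis by auto
qed

definition inch :: "nat list \<Rightarrow> nat list" where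
  "inch xs = (hd xs + 1) # tl xs"

lemma T_step: "T d s (Suc (Suc n)) =
   Cons 1 ` (if \<bar>s+1\<bar> \<le> int d then T d (-(s+1)) (Suc n) else {}) \<union> inch ` T d (s+1) (Suc n)"
proof (intro set_eqI iffI)
  fix xs assume h: "xs \<in> T d s (Suc (Suc n))"
  then obtain a ys where xs: "xs = a # ys" by (cases xs) (auto simp: T_def)
  have o: "0 < a" "\<bar>s + int a\<bar> \<le> int d" "ok d (-(s+int a)) ys" "a + sum_list ys = Suc (Suc n)"
    using h xs by (auto simp: T_def)
  show "xs \<in> Cons 1 ` (if \<bar>s+1\<bar> \<le> int d then T d (-(s+1)) (Suc n) else {}) \<union> inch ` T d (s+1) (Suc n)"
  proof (cases "a = 1")
    case True
    then show ?thesis using o xs by (auto simp: T_def)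
  next
    case False
    then have a2: "a \<ge> 2" using o by simp
    have "(a-1) # ys \<in> T d (s+1) (Suc n)"
      using o a2 by (auto simp: T_def of_nat_diff algebra_simps)
    moreover have "xs = inch ((a-1)#ys)" using xs a2 by (simp add: inch_def)
    ultimately show ?thesis by blast
  qed
next
  fix xs assume "xs \<in> Cons 1 ` (if \<bar>s+1\<bar> \<le> int d then T d (-(s+1)) (Suc n) else {}) \<union> inch ` T d (s+1) (Suc n)"
  then consider (a) ys where "xs = 1 # ys" "\<bar>s+1\<bar> \<le> int d" "ys \<in> T d (-(s+1)) (Suc n)"
    | (b) ys where "xs = inch ys" "ys \<in> T d (s+1) (Suc n)"
    by (auto split: if_splits)
  then show "xs \<in> T d s (Suc (Suc n))"
  proof cases
    case a then show ?thesis by (auto simp: T_def)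
  next
    case b
    then obtain c zs where ys: "ys = c # zs" by (cases ys) (auto simp: T_def)
    then show ?thesis using b by (auto simp: T_def inch_def algebra_simps)
  qed
qed

lemma card_T_step: "card (T d s (Suc (Suc n))) =
   (if \<bar>s+1\<bar> \<le> int d then card (T d (-(s+1)) (Suc n)) else 0) + card (T d (s+1) (Suc n))"
proof -
  define C where "C = (if \<bar>s+1\<bar> \<le> int d then T d (-(s+1)) (Suc n) else {})"
  define B0 where "B0 = T d (s+1) (Suc n)"
  have fC: "finite C" unfolding C_def using finite_T by simp
  have fB0: "finite B0" unfolding B0_def using finite_T by simp
  have fA: "finite (Cons 1 ` C)" using fC by simp
  have fB: "finite (inch ` B0)" using fB0 by simp
  have hdB: "hd x \<ge> 2" if "x \<in> inch ` B0" for x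
  proof -
    from that obtain ys where ys: "x = inch ys" "ys \<in> B0" by blast
    then obtain c zs where c: "ys = c # zs" by (cases ys) (auto simp: T_def B0_def)
    have "ok d (s+1) ys" using ys(2) by (simp add: T_def B0_def)
    then have "0 < c" using c by simp
    then show ?thesis using ys(1) c by (simp add: inch_def)
  qed
  have hdA: "hd x = 1" if "x \<in> Cons 1 ` C" for x using that by auto
  have disj: "Cons 1 ` C \<inter> inch ` B0 = {}"
  proof (rule ccontr)
    assume "Cons 1 ` C \<inter> inch ` B0 \<noteq> {}"
    then obtain x where "x \<in> Cons 1 ` C" "x \<in> inch ` B0" by blast
    then have "hd x = 1" "hd x \<ge> 2" using hdA hdB by blast+
    then show False by simp
  qed
  have injB: "inj_on inch B0"
  proof (rule inj_onI)
    fix x y assume x: "x \<in> B0" and y: "y \<in> B0" and e: "inch x = inch y"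
    from x obtain a xs where "x = a#xs" by (cases x) (auto simp: T_def B0_def)
    moreover from y obtain b ys where "y = b#ys" by (cases y) (auto simp: T_def B0_def)
    ultimately show "x = y" using e by (simp add: inch_def)
  qed
  have eqT: "T d s (Suc (Suc n)) = Cons 1 ` C \<union> inch ` B0"
    unfolding C_def B0_def by (rule T_step)
  have "card (T d s (Suc (Suc n))) = card (Cons 1 ` C) + card (inch ` B0)"
    unfolding eqT by (rule card_Un_disjoint[OF fA fB disj])
  also have "card (Cons 1 ` C) = card C"
    by (rule card_image) (simp add: inj_on_def)
  also have "card (inch ` B0) = card B0" using card_image[OF injB] .
  finally show ?thesis unfolding C_def B0_def by simp
qed

lemma card_T: "- int d \<le> s \<Longrightarrow> card (T d s (Suc n)) = W d n (s+1)"
proof (induction n arbitrary: s)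
  case 0 then show ?case by (simp add: T_one)
next
  case (Suc n)
  show ?case
  proof (cases "\<bar>s+1\<bar> \<le> int d")
    case True
    have h1: "- int d \<le> -(s+1)" using True abs_le_D2 by fastforce
    have 1: "card (T d (-(s+1)) (Suc n)) = W d n (-(s+1)+1)" using Suc.IH[OF h1] .
    have e1: "-(s+1)+1 = - s" by simp
    have 6: "card (T d (-(s+1)) (Suc n)) = W d n s" using 1 unfolding e1 W_neg .
    have h2: "- int d \<le> s+1" using Suc.prems by linarith
    have 2: "card (T d (s+1) (Suc n)) = W d n (s+1+1)" using Suc.IH[OF h2] .
    have 4: "W d (Suc n) (s+1) = W d n (s+1+1) + W d n (s+1-1)" using True by (simp only: W.simps if_True)
    have e2: "s+1-1 = s" by simp
    have 5: "card (T d s (Suc (Suc n))) = card (T d (-(s+1)) (Suc n)) + card (T d (s+1) (Suc n))"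
      using card_T_step[of d s n] True by (simp only: if_True)
    show ?thesis using 6 2 4 5 unfolding e2 by linarith
  next
    case False
    then have g: "s + 1 > int d" using Suc.prems unfolding abs_le_iff by linarith
    have w: "W d n (s+1+1) = 0" by (rule W_out) (use g in \<open>simp add: abs_if\<close>)
    have "- int d \<le> s + 1" using Suc.prems by linarith
    then have "card (T d (s+1) (Suc n)) = 0" using Suc.IH[of "s+1"] w by argo
    moreover have "W d (Suc n) (s+1) = 0" using False by (simp only: W.simps if_False)
    ultimately show ?thesis using False card_T_step[of d s n] by (simp only: if_False)
  qed
qed

lemma zeta_W: "1 \<le> d \<Longrightarrow> 0 < m \<Longrightarrow> zeta m d = W d (m-1) 1"
proof -
  assume d: "1 \<le> d" and m: "0 < m"
  have "deviation_set m d xs \<longleftrightarrow> xs \<in> T d 0 m" for xs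
    unfolding T_def deviation_set_def mem_Collect_eq ok_iff[OF d, of 0] using d by auto
  then have "{xs. deviation_set m d xs} = T d 0 m" by blast
  then have "zeta m d = card (T d 0 (Suc (m-1)))" using m by (simp add: zeta_def)
  then show ?thesis using card_T[of d 0 "m-1"] by simp
qed

lemma rec1: "W 1 (Suc (Suc n)) 1 = 2 * W 1 n 1" by (simp add: W_out)
lemma rec2: "W 2 (Suc (Suc n)) 1 = 3 * W 2 n 1" by (simp add: W_out)
lemma rec3: "W 3 (Suc (Suc (Suc (Suc n)))) 1 + 2 * W 3 n 1 = 4 * W 3 (Suc (Suc n)) 1" by (simp add: W_out)
lemma rec4: "W 4 (Suc (Suc (Suc (Suc n)))) 1 + 5 * W 4 n 1 = 5 * W 4 (Suc (Suc n)) 1" by (simp add: W_out)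
lemma rec5: "W 5 (Suc (Suc (Suc (Suc (Suc (Suc n)))))) 1 + 9 * W 5 (Suc (Suc n)) 1 = 6 * W 5 (Suc (Suc (Suc (Suc n)))) 1 + 2 * W 5 n 1" by (simp add: W_out)


lemma two_cases: "(n::nat) < 2 \<Longrightarrow> n = 0 \<or> n = 1" by auto
lemma small4: "(n::nat) < 4 \<Longrightarrow> n = 0 \<or> n = 1 \<or> n = 2 \<or> n = 3" by auto
lemma small6: "(n::nat) < 6 \<Longrightarrow> n = 0 \<or> n = 1 \<or> n = 2 \<or> n = 3 \<or> n = 4 \<or> n = 5" by auto

lemma W1: "W 1 n 1 = 2 ^ (n div 2)"
proof (induction n rule: less_induct)
  case (less n)
  show ?case
  proof (cases "n < 2")
    case True then show ?thesis using two_cases[OF True] by (auto simp: W_out)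
  next
    case False then obtain k where n: "n = Suc (Suc k)" by (metis add_2_eq_Suc le_add_diff_inverse not_less)
    then show ?thesis using less.IH[of k] rec1[of k] by simp
  qed
qed

lemma W2: "W 2 n 1 = 3 ^ (n div 2)"
proof (induction n rule: less_induct)
  case (less n)
  show ?case
  proof (cases "n < 2")
    case True then show ?thesis using two_cases[OF True] by (auto simp: W_out)
  next
    case False then obtain k where n: "n = Suc (Suc k)" by (metis add_2_eq_Suc le_add_diff_inverse not_less)
    then show ?thesis using less.IH[of k] rec2[of k] by simp
  qed
qed

lemma pow_rec2:
  fixes r b c :: real
  assumes "r*r = b*r - c"
  shows "r^(k+2) = b*r^(k+1) - c*r^k"
proof -
  have "r^(k+2) = r^k*(r*r)" by (simp add: power_add power2_eq_square)
  also have "\<dots> = r^k*(b*r-c)" using assms by simp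
  also have "\<dots> = b*r^(k+1) - c*r^k" by (simp add: algebra_simps)
  finally show ?thesis .
qed

lemma pow_rec3:
  fixes r :: real
  assumes "r*r = 4*r - 1"
  shows "r^(k+3) = 6*r^(k+2) - 9*r^(k+1) + 2*r^k"
proof -
  have c: "r*r*r = 15*r - 4"
  proof -
    have "r*r*r = (4*r-1)*r" using assms by simp
    also have "\<dots> = 4*(r*r) - r" by (simp add: algebra_simps)
    finally show ?thesis using assms by simp
  qed
  have "r^(k+3) = r^k*(r*r*r)" by (simp add: power_add power3_eq_cube)
  also have "\<dots> = r^k*(6*(r*r) - 9*r + 2)" using c assms by simp
  also have "\<dots> = 6*r^(k+2) - 9*r^(k+1) + 2*r^k" by (simp add: algebra_simps power_add power2_eq_square)
  finally show ?thesis .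
qed

lemma pow_rec3_2: "(2::real)^(k+3) = 6*2^(k+2) - 9*2^(k+1) + 2*2^k"
  by (simp add: power_add)

definition F3 :: "nat \<Rightarrow> real" where "F3 k = ((2 + sqrt 2) ^ k + (2 - sqrt 2) ^ k) / 4"
definition F4 :: "nat \<Rightarrow> real" where "F4 k = (((5 + sqrt 5) / 2) ^ k + ((5 - sqrt 5) / 2) ^ k) / 5"
definition F5 :: "nat \<Rightarrow> real" where "F5 k = ((2 + sqrt 3) ^ k + (2 - sqrt 3) ^ k + 2 ^ k) / 6"

lemma r3a: "(2 + sqrt 2) * (2 + sqrt 2) = 4 * (2 + sqrt 2) - 2" by (simp add: algebra_simps)
lemma r3b: "(2 - sqrt 2) * (2 - sqrt 2) = 4 * (2 - sqrt 2) - 2" by (simp add: algebra_simps)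
lemma r4a: "((5 + sqrt 5)/2) * ((5 + sqrt 5)/2) = 5 * ((5 + sqrt 5)/2) - 5" by (simp add: algebra_simps field_simps)
lemma r4b: "((5 - sqrt 5)/2) * ((5 - sqrt 5)/2) = 5 * ((5 - sqrt 5)/2) - 5" by (simp add: algebra_simps field_simps)
lemma r5a: "(2 + sqrt 3) * (2 + sqrt 3) = 4 * (2 + sqrt 3) - 1" by (simp add: algebra_simps)
lemma r5b: "(2 - sqrt 3) * (2 - sqrt 3) = 4 * (2 - sqrt 3) - 1" by (simp add: algebra_simps)

lemma lin2:
  assumes "(x::real) = b*x1 - c*x0" "y = b*y1 - c*y0"
  shows "(x+y)/e = b*((x1+y1)/e) - c*((x0+y0)/e)"
proof -
  have "x + y = b*(x1+y1) - c*(x0+y0)" using assms by (simp add: algebra_simps)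
  then show ?thesis by (simp add: diff_divide_distrib)
qed
lemma lin3:
  assumes "(x::real) = 6*x2 - 9*x1 + 2*x0" "y = 6*y2 - 9*y1 + 2*y0" "z = 6*z2 - 9*z1 + 2*z0"
  shows "(x+y+z)/e = 6*((x2+y2+z2)/e) - 9*((x1+y1+z1)/e) + 2*((x0+y0+z0)/e)"
proof -
  have "x + y + z = 6*(x2+y2+z2) - 9*(x1+y1+z1) + 2*(x0+y0+z0)" using assms by (simp add: algebra_simps)
  then show ?thesis by (simp add: diff_divide_distrib add_divide_distrib)
qed

lemma F3_rec: "F3 (k+2) = 4 * F3 (k+1) - 2 * F3 k"
  unfolding F3_def by (rule lin2[OF pow_rec2[OF r3a] pow_rec2[OF r3b]])
lemma F4_rec: "F4 (k+2) = 5 * F4 (k+1) - 5 * F4 k"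
  unfolding F4_def by (rule lin2[OF pow_rec2[OF r4a] pow_rec2[OF r4b]])
lemma F5_rec: "F5 (k+3) = 6 * F5 (k+2) - 9 * F5 (k+1) + 2 * F5 k"
  unfolding F5_def by (rule lin3[OF pow_rec3[OF r5a] pow_rec3[OF r5b] pow_rec3_2])

lemma F3_1: "F3 1 = 1" by (simp add: F3_def)
lemma F3_2: "F3 2 = 3" unfolding F3_def power2_eq_square r3a r3b by (simp add: field_simps)
lemma F4_1: "F4 1 = 1" unfolding F4_def by (simp add: field_simps)
lemma F4_2: "F4 2 = 3" unfolding F4_def power2_eq_square r4a r4b by (simp add: field_simps)
lemma F5_1: "F5 1 = 1" by (simp add: F5_def)
lemma F5_2: "F5 2 = 3" unfolding F5_def power2_eq_square r5a r5b by (simp add: field_simps)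
lemma F5_3: "F5 3 = 10"
proof -
  have e: "(0::nat)+3 = 3" "(0::nat)+2 = 2" "(0::nat)+1 = 1" by simp_all
  have r: "F5 3 = 6 * F5 2 - 9 * F5 1 + 2 * F5 0" using F5_rec[of 0] unfolding e .
  have "F5 0 = 1/2" by (simp add: F5_def)
  then show ?thesis using r F5_1 F5_2 by linarith
qed


lemma Fbase: "F3 (Suc 0) = 1" "F4 (Suc 0) = 1" "F5 (Suc 0) = 1"
  "F3 (Suc (Suc 0)) = 3" "F4 (Suc (Suc 0)) = 3" "F5 (Suc (Suc 0)) = 3"
  using F3_1 F4_1 F5_1 F3_2 F4_2 F5_2 by (simp_all only: numeral_2_eq_2 One_nat_def)

lemma Wvals: "W 3 0 1 = 1" "W 3 1 1 = 1" "W 3 2 1 = 3" "W 3 3 1 = 3"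
  "W 4 0 1 = 1" "W 4 1 1 = 1" "W 4 2 1 = 3" "W 4 3 1 = 3"
  "W 5 0 1 = 1" "W 5 1 1 = 1" "W 5 2 1 = 3" "W 5 3 1 = 3" "W 5 4 1 = 10" "W 5 5 1 = 10"
  by (simp_all add: W_out eval_nat_numeral)

lemma W3: "real (W 3 n 1) = F3 ((n+2) div 2)"
proof (induction n rule: less_induct)
  case (less n)
  show ?case
  proof (cases "n < 4")
    case True
    have "n = 0 \<or> n = 1 \<or> n = 2 \<or> n = 3" using small4[OF True] by simp
    moreover have "n = 0 \<Longrightarrow> ?thesis"
    proof -
      assume a: "n = 0"
      have "(n+2) div 2 = 1" unfolding a by simp
      moreover have "real (W 3 n 1) = 1" unfolding a using Wvals by simp
      ultimately show "real (W 3 n 1) = F3 ((n+2) div 2)" using F3_1 by (simp only:)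
    qed
    moreover have "n = 1 \<Longrightarrow> ?thesis"
    proof -
      assume a: "n = 1"
      have "(n+2) div 2 = 1" unfolding a by simp
      moreover have "real (W 3 n 1) = 1" unfolding a using Wvals by simp
      ultimately show "real (W 3 n 1) = F3 ((n+2) div 2)" using F3_1 by (simp only:)
    qed
    moreover have "n = 2 \<Longrightarrow> ?thesis"
    proof -
      assume a: "n = 2"
      have "(n+2) div 2 = 2" unfolding a by simp
      moreover have "real (W 3 n 1) = 3" unfolding a using Wvals by simp
      ultimately show "real (W 3 n 1) = F3 ((n+2) div 2)" using F3_2 by (simp only:)
    qed
    moreover have "n = 3 \<Longrightarrow> ?thesis"
    proof -
      assume a: "n = 3"
      have "(n+2) div 2 = 2" unfolding a by simp
      moreover have "real (W 3 n 1) = 3" unfolding a using Wvals by simp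
      ultimately show "real (W 3 n 1) = F3 ((n+2) div 2)" using F3_2 by (simp only:)
    qed
    ultimately show ?thesis by blast
  next
    case False
    define k where "k = n - 4"
    have n: "n = Suc (Suc (Suc (Suc k)))" using False unfolding k_def by linarith
    define j where "j = (k+2) div 2"
    have d1: "(k+2) div 2 = j" "(Suc (Suc k) + 2) div 2 = j + 1" "(n+2) div 2 = j + 2" unfolding j_def n by presburger+
    have h: "real (W 3 (Suc(Suc(Suc(Suc k)))) 1) + 2 * real (W 3 k 1) = 4 * real (W 3 (Suc (Suc k)) 1)"
      using arg_cong[where f=real, OF rec3[of k]] by simp
    have i1: "real (W 3 (Suc (Suc k)) 1) = F3 (j+1)" using less.IH[of "Suc (Suc k)"] n d1 by simp
    have i2: "real (W 3 k 1) = F3 j" using less.IH[of k] n d1 by simp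
    have "real (W 3 n 1) = F3 (j+2)" using h i1 i2 F3_rec[of j] unfolding n by linarith
    then show ?thesis unfolding d1(3) .
  qed
qed

lemma W4: "real (W 4 n 1) = F4 ((n+2) div 2)"
proof (induction n rule: less_induct)
  case (less n)
  show ?case
  proof (cases "n < 4")
    case True
    have "n = 0 \<or> n = 1 \<or> n = 2 \<or> n = 3" using small4[OF True] by simp
    moreover have "n = 0 \<Longrightarrow> ?thesis"
    proof -
      assume a: "n = 0"
      have "(n+2) div 2 = 1" unfolding a by simp
      moreover have "real (W 4 n 1) = 1" unfolding a using Wvals by simp
      ultimately show "real (W 4 n 1) = F4 ((n+2) div 2)" using F4_1 by (simp only:)
    qed
    moreover have "n = 1 \<Longrightarrow> ?thesis"
    proof -
      assume a: "n = 1"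
      have "(n+2) div 2 = 1" unfolding a by simp
      moreover have "real (W 4 n 1) = 1" unfolding a using Wvals by simp
      ultimately show "real (W 4 n 1) = F4 ((n+2) div 2)" using F4_1 by (simp only:)
    qed
    moreover have "n = 2 \<Longrightarrow> ?thesis"
    proof -
      assume a: "n = 2"
      have "(n+2) div 2 = 2" unfolding a by simp
      moreover have "real (W 4 n 1) = 3" unfolding a using Wvals by simp
      ultimately show "real (W 4 n 1) = F4 ((n+2) div 2)" using F4_2 by (simp only:)
    qed
    moreover have "n = 3 \<Longrightarrow> ?thesis"
    proof -
      assume a: "n = 3"
      have "(n+2) div 2 = 2" unfolding a by simp
      moreover have "real (W 4 n 1) = 3" unfolding a using Wvals by simp
      ultimately show "real (W 4 n 1) = F4 ((n+2) div 2)" using F4_2 by (simp only:)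
    qed
    ultimately show ?thesis by blast
  next
    case False
    define k where "k = n - 4"
    have n: "n = Suc (Suc (Suc (Suc k)))" using False unfolding k_def by linarith
    define j where "j = (k+2) div 2"
    have d1: "(k+2) div 2 = j" "(Suc (Suc k) + 2) div 2 = j + 1" "(n+2) div 2 = j + 2" unfolding j_def n by presburger+
    have h: "real (W 4 (Suc(Suc(Suc(Suc k)))) 1) + 5 * real (W 4 k 1) = 5 * real (W 4 (Suc (Suc k)) 1)"
      using arg_cong[where f=real, OF rec4[of k]] by simp
    have i1: "real (W 4 (Suc (Suc k)) 1) = F4 (j+1)" using less.IH[of "Suc (Suc k)"] n d1 by simp
    have i2: "real (W 4 k 1) = F4 j" using less.IH[of k] n d1 by simp
    have "real (W 4 n 1) = F4 (j+2)" using h i1 i2 F4_rec[of j] unfolding n by linarith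
    then show ?thesis unfolding d1(3) .
  qed
qed

lemma W5: "real (W 5 n 1) = F5 ((n+2) div 2)"
proof (induction n rule: less_induct)
  case (less n)
  show ?case
  proof (cases "n < 6")
    case True
    have "n = 0 \<or> n = 1 \<or> n = 2 \<or> n = 3 \<or> n = 4 \<or> n = 5" using small6[OF True] by simp
    moreover have "n = 0 \<Longrightarrow> ?thesis"
    proof -
      assume a: "n = 0"
      have "(n+2) div 2 = 1" unfolding a by simp
      moreover have "real (W 5 n 1) = 1" unfolding a using Wvals by simp
      ultimately show "real (W 5 n 1) = F5 ((n+2) div 2)" using F5_1 by (simp only:)
    qed
    moreover have "n = 1 \<Longrightarrow> ?thesis"
    proof -
      assume a: "n = 1"
      have "(n+2) div 2 = 1" unfolding a by simp
      moreover have "real (W 5 n 1) = 1" unfolding a using Wvals by simp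
      ultimately show "real (W 5 n 1) = F5 ((n+2) div 2)" using F5_1 by (simp only:)
    qed
    moreover have "n = 2 \<Longrightarrow> ?thesis"
    proof -
      assume a: "n = 2"
      have "(n+2) div 2 = 2" unfolding a by simp
      moreover have "real (W 5 n 1) = 3" unfolding a using Wvals by simp
      ultimately show "real (W 5 n 1) = F5 ((n+2) div 2)" using F5_2 by (simp only:)
    qed
    moreover have "n = 3 \<Longrightarrow> ?thesis"
    proof -
      assume a: "n = 3"
      have "(n+2) div 2 = 2" unfolding a by simp
      moreover have "real (W 5 n 1) = 3" unfolding a using Wvals by simp
      ultimately show "real (W 5 n 1) = F5 ((n+2) div 2)" using F5_2 by (simp only:)
    qed
    moreover have "n = 4 \<Longrightarrow> ?thesis"
    proof -
      assume a: "n = 4"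
      have "(n+2) div 2 = 3" unfolding a by simp
      moreover have "real (W 5 n 1) = 10" unfolding a using Wvals by simp
      ultimately show "real (W 5 n 1) = F5 ((n+2) div 2)" using F5_3 by (simp only:)
    qed
    moreover have "n = 5 \<Longrightarrow> ?thesis"
    proof -
      assume a: "n = 5"
      have "(n+2) div 2 = 3" unfolding a by simp
      moreover have "real (W 5 n 1) = 10" unfolding a using Wvals by simp
      ultimately show "real (W 5 n 1) = F5 ((n+2) div 2)" using F5_3 by (simp only:)
    qed
    ultimately show ?thesis by blast
  next
    case False
    define k where "k = n - 6"
    have n: "n = Suc (Suc (Suc (Suc (Suc (Suc k)))))" using False unfolding k_def by linarith
    define j where "j = (k+2) div 2"
    have d1: "(k+2) div 2 = j" "(Suc (Suc k) + 2) div 2 = j + 1" "(Suc (Suc (Suc (Suc k))) + 2) div 2 = j + 2" "(n+2) div 2 = j + 3"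
      unfolding j_def n by presburger+
    have h: "real (W 5 (Suc(Suc(Suc(Suc(Suc(Suc k)))))) 1) + 9 * real (W 5 (Suc (Suc k)) 1) = 6 * real (W 5 (Suc(Suc(Suc(Suc k)))) 1) + 2 * real (W 5 k 1)"
      using arg_cong[where f=real, OF rec5[of k]] by simp
    have i1: "real (W 5 (Suc (Suc k)) 1) = F5 (j+1)" using less.IH[of "Suc (Suc k)"] n d1 by simp
    have i2: "real (W 5 k 1) = F5 j" using less.IH[of k] n d1 by simp
    have i3: "real (W 5 (Suc(Suc(Suc(Suc k)))) 1) = F5 (j+2)" using less.IH[of "Suc(Suc(Suc(Suc k)))"] n d1 by simp
    have "real (W 5 n 1) = F5 (j+3)" using h i1 i2 i3 F5_rec[of j] unfolding n by linarith
    then show ?thesis unfolding d1(4) .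
  qed
qed

theorem lemma2:
  fixes m :: nat
  assumes "0 < m"
  shows "zeta m 1 = 2 ^ ((m - 1) div 2) \<and>
    zeta m 2 = 3 ^ ((m - 1) div 2) \<and>
    real (zeta m 3) = ((2 + sqrt 2) ^ ((m + 1) div 2) + (2 - sqrt 2) ^ ((m + 1) div 2)) / 4 \<and>
    real (zeta m 4) = (((5 + sqrt 5) / 2) ^ ((m + 1) div 2) + ((5 - sqrt 5) / 2) ^ ((m + 1) div 2)) / 5 \<and>
    real (zeta m 5) = ((2 + sqrt 3) ^ ((m + 1) div 2) + (2 - sqrt 3) ^ ((m + 1) div 2) + 2 ^ ((m + 1) div 2)) / 6"
proof -
  have e: "(m - 1 + 2) div 2 = (m + 1) div 2" using assms by simp
  have z: "zeta m d = W d (m-1) 1" if "1 \<le> d" for d using zeta_W[OF that assms] .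
  have a1: "zeta m 1 = 2 ^ ((m - 1) div 2)" using z[of 1] W1[of "m-1"] by simp
  have a2: "zeta m 2 = 3 ^ ((m - 1) div 2)" using z[of 2] W2[of "m-1"] by simp
  have a3: "real (zeta m 3) = F3 ((m + 1) div 2)" using z[of 3] W3[of "m-1"] unfolding e by simp
  have a4: "real (zeta m 4) = F4 ((m + 1) div 2)" using z[of 4] W4[of "m-1"] unfolding e by simp
  have a5: "real (zeta m 5) = F5 ((m + 1) div 2)" using z[of 5] W5[of "m-1"] unfolding e by simp
  show ?thesis using a1 a2 a3 a4 a5 unfolding F3_def F4_def F5_def by blast
qed

end
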